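(* Let $g:\mathcal A_{\mathbf X}\to\mathbb R$ satisfy $g(x)-g(y)\le S_c(y,x)$ for all $x,y\in\mathcal A_{\mathbf X}$. Then $$v(x)=\min\{g(y)+S_c(y,x):y\in\mathcal A_{\mathbf X}\},\qquad x\in\mathbf V,$$ is the unique solution of $(DFE_c)$ on $\mathbf V$ which coincides with $g$ on $\mathcal A_{\mathbf X}$.
   Context: Network $\Gamma$ (finite arcs $\mathcal E$ closed under inversion $\tilde\gamma(s)=\gamma(1-s)$, vertices $\mathbf V$, connected), Hamiltonians $H_\gamma$ continuous, coercive, quasiconvex with $\mathrm{Int}\{H_\gamma(s,\cdot)\le b\}=\{H_\gamma(s,\cdot)<b\}$, $H_{\tilde\gamma}(s,p)=H_\gamma(1-s,-p)$; $a_\gamma=\max_s\min_pH_\gamma$, $c_\gamma$ = least level admitting a periodic viscosity subsolution, $a_0=\max\{\max_{\gamma\text{ not closed}}a_\gamma,\max_{\gamma\text{ closed}}c_\gamma\}$, $\min_pH_\gamma(s,p)$ constant in $s$ whenever $a_\gamma=a_0$. Graph $\mathbf X=(\mathbf V,\mathbf E)$, bijection $\Psi:\mathbf E\to\mathcal E$, $\mathrm o(e)=\Psi(e)(0)$, $\mathrm t(e)=\Psi(e)(1)$, $-e=\Psi^{-1}(\widetilde{\Psi(e)})$, $\mathbf E_x=\{e:\mathrm o(e)=x\}$, $\sigma_a(e)=\int_0^1\max\{p:H_{\Psi(e)}(t,p)=a\}dt$. Paths $\xi=(e_1,\dots,e_M)$, $M\ge 1$, $\mathrm t(e_j)=\mathrm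 o(e_{j+1})$; cycles: $\mathrm t(e_M)=\mathrm o(e_1)$; incident on $y$ if some $e_i$ has $y$ as endpoint; $\sigma_a(\xi)=\sum\sigma_a(e_i)$; $S_a(x,y)=\inf\{\sigma_a(\xi):\xi$ path linking $x$ to $y\}$. $(DFE_a)$: $u(x)=\min_{e\in\mathbf E_x}(u(\mathrm t(e))+\sigma_a(-e))$, $x\in\mathbf V$; subsolution: $u(\mathrm t(e))-u(\mathrm o(e))\le\sigma_a(e)$ $\forall e$. Critical value $c=\min\{a\ge a_0:(DFE_a)$ has a subsolution$\}$. Projected Aubry set: $\mathcal A_{\mathbf X}=\{y\in\mathbf V:$ there is a cycle $\xi$ incident on $y$ with $\sigma_c(\xi)=0\}$ (it is nonempty). *)

theory Defs
  imports "HOL-Analysis.Analysis"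
begin

text \<open>Abstract graph X = (V, E): edges of type 'e, vertices of type 'v.
  og e = o(e) (origin), tm e = t(e) (terminal), rv e = -e (reversed edge).
  The Hamiltonian of the arc Psi(e) is H e :: real => real => real, H e s p.\<close>

definition is_path :: "'e set \<Rightarrow> ('e \<Rightarrow> 'v) \<Rightarrow> ('e \<Rightarrow> 'v) \<Rightarrow> 'e list \<Rightarrow> bool" where
  "is_path E og tm xs \<longleftrightarrow> xs \<noteq> [] \<and> set xs \<subseteq> E \<and>
     (\<forall>i. Suc i < length xs \<longrightarrow> tm (xs ! i) = og (xs ! Suc i))"

definition path_links :: "'e set \<Rightarrow> ('e \<Rightarrow> 'v) \<Rightarrow> ('e \<Rightarrow> 'v) \<Rightarrow> 'e list \<Rightarrow> 'v \<Rightarrow> 'v \<Rightarrow> bool" where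
  "path_links E og tm xs x y \<longleftrightarrow> is_path E og tm xs \<and> og (hd xs) = x \<and> tm (last xs) = y"

definition is_cycle :: "'e set \<Rightarrow> ('e \<Rightarrow> 'v) \<Rightarrow> ('e \<Rightarrow> 'v) \<Rightarrow> 'e list \<Rightarrow> bool" where
  "is_cycle E og tm xs \<longleftrightarrow> is_path E og tm xs \<and> tm (last xs) = og (hd xs)"

definition incident :: "('e \<Rightarrow> 'v) \<Rightarrow> ('e \<Rightarrow> 'v) \<Rightarrow> 'e list \<Rightarrow> 'v \<Rightarrow> bool" where
  "incident og tm xs y \<longleftrightarrow> (\<exists>e\<in>set xs. og e = y \<or> tm e = y)"

definition minH :: "('e \<Rightarrow> real \<Rightarrow> real \<Rightarrow> real) \<Rightarrow> 'e \<Rightarrow> real \<Rightarrow> real" where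
  "minH H e s = Inf (range (H e s))"

definition a_arc :: "('e \<Rightarrow> real \<Rightarrow> real \<Rightarrow> real) \<Rightarrow> 'e \<Rightarrow> real" where
  "a_arc H e = Sup ((\<lambda>s. minH H e s) ` {0..1})"

definition periodic_visc_subsol :: "('e \<Rightarrow> real \<Rightarrow> real \<Rightarrow> real) \<Rightarrow> 'e \<Rightarrow> real \<Rightarrow> (real \<Rightarrow> real) \<Rightarrow> bool" where
  "periodic_visc_subsol H e a u \<longleftrightarrow> continuous_on {0..1} u \<and> u 0 = u 1 \<and>
     (\<forall>s \<in> {0<..<1}. \<forall>\<phi> d. (\<phi> has_real_derivative d) (at s) \<longrightarrow>
        (\<exists>\<epsilon>>0. \<forall>r. r \<in> {0<..<1} \<and> \<bar>r - s\<bar> < \<epsilon> \<longrightarrow> u r - \<phi> r \<le> u s - \<phi> s) \<longrightarrow>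
        H e s d \<le> a)"

definition c_arc :: "('e \<Rightarrow> real \<Rightarrow> real \<Rightarrow> real) \<Rightarrow> 'e \<Rightarrow> real" where
  "c_arc H e = Inf {a. \<exists>u. periodic_visc_subsol H e a u}"

definition a_zero :: "'e set \<Rightarrow> ('e \<Rightarrow> 'v) \<Rightarrow> ('e \<Rightarrow> 'v) \<Rightarrow> ('e \<Rightarrow> real \<Rightarrow> real \<Rightarrow> real) \<Rightarrow> real" where
  "a_zero E og tm H = Max ({a_arc H e | e. e \<in> E \<and> og e \<noteq> tm e} \<union>
                            {c_arc H e | e. e \<in> E \<and> og e = tm e})"

definition sigma :: "('e \<Rightarrow> real \<Rightarrow> real \<Rightarrow> real) \<Rightarrow> real \<Rightarrow> 'e \<Rightarrow> real" where
  "sigma H a e = integral {0..1} (\<lambda>t. Sup {p. H e t p = a})"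

definition sigma_path :: "('e \<Rightarrow> real \<Rightarrow> real \<Rightarrow> real) \<Rightarrow> real \<Rightarrow> 'e list \<Rightarrow> real" where
  "sigma_path H a xs = sum_list (map (sigma H a) xs)"

definition S_dist :: "'e set \<Rightarrow> ('e \<Rightarrow> 'v) \<Rightarrow> ('e \<Rightarrow> 'v) \<Rightarrow> ('e \<Rightarrow> real \<Rightarrow> real \<Rightarrow> real)
    \<Rightarrow> real \<Rightarrow> 'v \<Rightarrow> 'v \<Rightarrow> real" where
  "S_dist E og tm H a x y = Inf {sigma_path H a xs | xs. path_links E og tm xs x y}"

definition DFE_subsol :: "'e set \<Rightarrow> ('e \<Rightarrow> 'v) \<Rightarrow> ('e \<Rightarrow> 'v) \<Rightarrow> ('e \<Rightarrow> real \<Rightarrow> real \<Rightarrow> real)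
    \<Rightarrow> real \<Rightarrow> ('v \<Rightarrow> real) \<Rightarrow> bool" where
  "DFE_subsol E og tm H a u \<longleftrightarrow> (\<forall>e\<in>E. u (tm e) - u (og e) \<le> sigma H a e)"

definition DFE_sol :: "'v set \<Rightarrow> 'e set \<Rightarrow> ('e \<Rightarrow> 'v) \<Rightarrow> ('e \<Rightarrow> 'v) \<Rightarrow> ('e \<Rightarrow> 'e)
    \<Rightarrow> ('e \<Rightarrow> real \<Rightarrow> real \<Rightarrow> real) \<Rightarrow> real \<Rightarrow> ('v \<Rightarrow> real) \<Rightarrow> bool" where
  "DFE_sol V E og tm rv H a u \<longleftrightarrow>
     (\<forall>x\<in>V. u x = Min ((\<lambda>e. u (tm e) + sigma H a (rv e)) ` {e\<in>E. og e = x}))"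

definition critical_value :: "'e set \<Rightarrow> ('e \<Rightarrow> 'v) \<Rightarrow> ('e \<Rightarrow> 'v) \<Rightarrow> ('e \<Rightarrow> real \<Rightarrow> real \<Rightarrow> real) \<Rightarrow> real \<Rightarrow> bool" where
  "critical_value E og tm H c \<longleftrightarrow>
     (c \<ge> a_zero E og tm H \<and> (\<exists>u. DFE_subsol E og tm H c u) \<and>
      (\<forall>a. a \<ge> a_zero E og tm H \<and> (\<exists>u. DFE_subsol E og tm H a u) \<longrightarrow> c \<le> a))"

definition aubry :: "'v set \<Rightarrow> 'e set \<Rightarrow> ('e \<Rightarrow> 'v) \<Rightarrow> ('e \<Rightarrow> 'v) \<Rightarrow> ('e \<Rightarrow> real \<Rightarrow> real \<Rightarrow> real) \<Rightarrow> real \<Rightarrow> 'v set" where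
  "aubry V E og tm H c = {y\<in>V. \<exists>xs. is_cycle E og tm xs \<and> incident og tm xs y \<and> sigma_path H c xs = 0}"

definition network :: "'v set \<Rightarrow> 'e set \<Rightarrow> ('e \<Rightarrow> 'v) \<Rightarrow> ('e \<Rightarrow> 'v) \<Rightarrow> ('e \<Rightarrow> 'e)
    \<Rightarrow> ('e \<Rightarrow> real \<Rightarrow> real \<Rightarrow> real) \<Rightarrow> bool" where
  "network V E og tm rv H \<longleftrightarrow>
     finite E \<and> E \<noteq> {} \<and> V = og ` E \<and>
     (\<forall>e\<in>E. rv e \<in> E \<and> rv (rv e) = e \<and> rv e \<noteq> e \<and> og (rv e) = tm e) \<and>
     (\<forall>x\<in>V. \<forall>y\<in>V. x \<noteq> y \<longrightarrow> (\<exists>xs. path_links E og tm xs x y)) \<and>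
     (\<forall>e\<in>E.
        continuous_on ({0..1} \<times> UNIV) (\<lambda>(s, p). H e s p) \<and>
        (\<forall>b. \<exists>R. \<forall>s\<in>{0..1}. \<forall>p. \<bar>p\<bar> > R \<longrightarrow> H e s p > b) \<and>
        (\<forall>s\<in>{0..1}. \<forall>b. convex {p. H e s p \<le> b}) \<and>
        (\<forall>s\<in>{0..1}. \<forall>b. interior {p. H e s p \<le> b} = {p. H e s p < b}) \<and>
        (\<forall>s\<in>{0..1}. \<forall>p. H (rv e) s p = H e (1 - s) (- p)) \<and>
        (a_arc H e = a_zero E og tm H \<longrightarrow> (\<exists>m. \<forall>s\<in>{0..1}. minH H e s = m)))"

end

theory Submission
  imports Defs
begin

lemma pl_iff: "path_links E og tm xs x y \<longleftrightarrow> xs \<noteq> [] \<and> set xs \<subseteq> E \<and>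
   successively (\<lambda>e f. tm e = og f) xs \<and> og (hd xs) = x \<and> tm (last xs) = y"
  unfolding path_links_def is_path_def successively_conv_nth by auto

lemma pl_single: "e \<in> E \<Longrightarrow> path_links E og tm [e] (og e) (tm e)"
  by (simp add: pl_iff)

lemma pl_append: "path_links E og tm p a b \<Longrightarrow> path_links E og tm q b d \<Longrightarrow> path_links E og tm (p @ q) a d"
  by (auto simp: pl_iff successively_append_iff)

lemma rot: "path_links E og tm (as @ bs) a a \<Longrightarrow> as \<noteq> [] \<Longrightarrow> bs \<noteq> [] \<Longrightarrow>
   path_links E og tm (bs @ as) (og (hd bs)) (og (hd bs))"
  by (auto simp: pl_iff successively_append_iff)

lemma sp_append: "sigma_path H c (p @ q) = sigma_path H c p + sigma_path H c q"
  by (simp add: sigma_path_def)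

lemma sp_single: "sigma_path H c [e] = sigma H c e"
  by (simp add: sigma_path_def)

lemma lower_sub: "DFE_subsol E og tm H c w \<Longrightarrow> path_links E og tm p x y \<Longrightarrow> w y - w x \<le> sigma_path H c p"
proof (induction p arbitrary: x)
  case Nil thus ?case by (simp add: pl_iff)
next
  case (Cons e p)
  show ?case
  proof (cases "p = []")
    case True thus ?thesis using Cons.prems by (auto simp: pl_iff DFE_subsol_def sigma_path_def)
  next
    case False
    hence "path_links E og tm p (tm e) y" using Cons.prems by (auto simp: pl_iff successively_Cons)
    hence "w y - w (tm e) \<le> sigma_path H c p" using Cons by blast
    moreover have "w (tm e) - w x \<le> sigma H c e" using Cons.prems by (auto simp: pl_iff DFE_subsol_def)
    ultimately show ?thesis by (simp add: sigma_path_def)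
  qed
qed

primrec pth :: "(nat \<Rightarrow> 'e) \<Rightarrow> nat \<Rightarrow> nat \<Rightarrow> 'e list" where
  "pth w i 0 = []" | "pth w i (Suc n) = w (i + n) # pth w i n"

locale ctx =
  fixes V :: "'v set" and E :: "'e set" and og tm :: "'e \<Rightarrow> 'v" and rv :: "'e \<Rightarrow> 'e"
    and H :: "'e \<Rightarrow> real \<Rightarrow> real \<Rightarrow> real" and c :: real and u0 :: "'v \<Rightarrow> real"
  assumes net: "network V E og tm rv H" and sub: "DFE_subsol E og tm H c u0"
begin

lemma n1: "finite E" using net unfolding network_def by (elim conjE) assumption
lemma n2: "V = og ` E" using net unfolding network_def by (elim conjE) assumption
lemma n3: "\<forall>e\<in>E. rv e \<in> E \<and> rv (rv e) = e \<and> rv e \<noteq> e \<and> og (rv e) = tm e"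
  using net unfolding network_def by (elim conjE) assumption
lemma n4: "\<forall>x\<in>V. \<forall>y\<in>V. x \<noteq> y \<longrightarrow> (\<exists>xs. path_links E og tm xs x y)"
  using net unfolding network_def by (elim conjE) assumption

lemma finE: "finite E" and VE: "V = og ` E"
  and rvE: "e \<in> E \<Longrightarrow> rv e \<in> E" and rvrv: "e \<in> E \<Longrightarrow> rv (rv e) = e"
  and ogrv: "e \<in> E \<Longrightarrow> og (rv e) = tm e"
  and conn: "x \<in> V \<Longrightarrow> y \<in> V \<Longrightarrow> x \<noteq> y \<Longrightarrow> \<exists>xs. path_links E og tm xs x y"
  using n1 n2 n3 n4 by auto

lemma tmrv: "e \<in> E \<Longrightarrow> tm (rv e) = og e"
  using ogrv[of "rv e"] rvE rvrv by auto

lemma finV: "finite V" using finE VE by simp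

lemma ogV: "e \<in> E \<Longrightarrow> og e \<in> V" using VE by auto
lemma tmV: "e \<in> E \<Longrightarrow> tm e \<in> V" using VE ogrv rvE by (metis image_eqI)

lemma ex_path: "x \<in> V \<Longrightarrow> y \<in> V \<Longrightarrow> \<exists>p. path_links E og tm p x y"
proof (cases "x = y")
  case True
  assume "x \<in> V"
  then obtain e where e: "e \<in> E" "og e = x" using VE by auto
  have "path_links E og tm [rv e] (tm e) (tm (rv e))"
    using pl_single[OF rvE[OF e(1)], of og tm] unfolding ogrv[OF e(1)] .
  hence "path_links E og tm ([e] @ [rv e]) (og e) (tm (rv e))"
    by (rule pl_append[OF pl_single[OF e(1)]])
  thus ?thesis using True e tmrv by auto
qed (use conn in auto)

abbreviation "P x y \<equiv> {sigma_path H c p | p. path_links E og tm p x y}"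
abbreviation "S \<equiv> S_dist E og tm H c"

lemma S_le: "path_links E og tm p x y \<Longrightarrow> S x y \<le> sigma_path H c p"
  unfolding S_dist_def
  by (rule cInf_lower) (auto intro!: bdd_belowI[where m="u0 y - u0 x"] lower_sub[OF sub])

lemma S_ge: "x \<in> V \<Longrightarrow> y \<in> V \<Longrightarrow> (\<And>p. path_links E og tm p x y \<Longrightarrow> m \<le> sigma_path H c p) \<Longrightarrow> m \<le> S x y"
  unfolding S_dist_def using ex_path[of x y]
  by (intro cInf_greatest) auto

lemma S_sub: "DFE_subsol E og tm H c w \<Longrightarrow> x \<in> V \<Longrightarrow> y \<in> V \<Longrightarrow> w y - w x \<le> S x y"
  by (rule S_ge) (auto intro: lower_sub)

lemma aubryV: "aubry V E og tm H c \<subseteq> V" unfolding aubry_def by auto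

lemma S_self: assumes "y \<in> aubry V E og tm H c" shows "S y y = 0"
proof -
  have yV: "y \<in> V" using assms aubryV by auto
  obtain xs where cyc: "is_cycle E og tm xs" and inc: "incident og tm xs y" and z: "sigma_path H c xs = 0"
    using assms unfolding aubry_def by auto
  obtain e where e: "e \<in> set xs" "og e = y \<or> tm e = y" using inc unfolding incident_def by auto
  obtain as bs where xs: "xs = as @ e # bs" using split_list[OF e(1)] by auto
  have pl: "path_links E og tm xs (og (hd xs)) (og (hd xs))" using cyc
    unfolding is_cycle_def path_links_def by auto
  have pl': "path_links E og tm xs y' y'" if "y' = og (hd xs)" for y' using pl that by simp
  have sp_rot: "sigma_path H c (q @ p) = sigma_path H c (p @ q)" for p q
    by (simp add: sigma_path_def)
  have "\<exists>ys. path_links E og tm ys y y \<and> sigma_path H c ys = 0"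
  proof (cases "og e = y")
    case True
    show ?thesis
    proof (cases "as = []")
      case True
      thus ?thesis using pl' \<open>og e = y\<close> z xs by auto
    next
      case False
      have "path_links E og tm ((e # bs) @ as) (og (hd (e # bs))) (og (hd (e # bs)))"
        by (rule rot[OF _ False]) (use pl xs in auto)
      thus ?thesis using True z xs sp_rot[of "e # bs" as] by auto
    qed
  next
    case False
    hence T: "tm e = y" using e by auto
    show ?thesis
    proof (cases "bs = []")
      case True
      hence "tm (last xs) = y" using xs T by simp
      hence "y = og (hd xs)" using cyc unfolding is_cycle_def by simp
      thus ?thesis using pl' z by auto
    next
      case False
      have r: "path_links E og tm (bs @ (as @ [e])) (og (hd bs)) (og (hd bs))"
        by (rule rot[OF _ _ False]) (use pl xs in auto)
      hence "tm e = og (hd bs)" by (simp add: pl_iff)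
      thus ?thesis using r T z xs sp_rot[of bs "as @ [e]"] by auto
    qed
  qed
  then obtain ys where "path_links E og tm ys y y" "sigma_path H c ys = 0" by auto
  hence "S y y \<le> 0" using S_le by fastforce
  moreover have "0 \<le> S y y" using S_sub[OF sub yV yV] by simp
  ultimately show ?thesis by simp
qed

lemma tri_edge: assumes "x \<in> V" "y \<in> V" "e \<in> E" "tm e = x"
  shows "S y x \<le> S y (og e) + sigma H c e"
proof -
  have "S y x - sigma H c e \<le> S y (og e)"
  proof (rule S_ge[OF assms(2) ogV[OF assms(3)]])
    fix p assume "path_links E og tm p y (og e)"
    hence "path_links E og tm (p @ [e]) y x" using pl_append pl_single assms by fastforce
    hence "S y x \<le> sigma_path H c (p @ [e])" by (rule S_le)
    thus "S y x - sigma H c e \<le> sigma_path H c p" by (simp add: sp_append sp_single)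
  qed
  thus ?thesis by simp
qed

lemma last_edge: assumes y: "y \<in> aubry V E og tm H c" and x: "x \<in> V"
  shows "\<exists>e\<in>E. tm e = x \<and> S y (og e) + sigma H c e \<le> S y x"
proof -
  have yV: "y \<in> V" using y aubryV by auto
  define T where "T = {e\<in>E. tm e = x}"
  define F where "F = (\<lambda>e. S y (og e) + sigma H c e)"
  have fT: "finite T" using finE unfolding T_def by simp
  obtain p0 where p0: "path_links E og tm p0 y x" using ex_path[OF yV x] by auto
  have "last p0 \<in> T" using p0 unfolding T_def pl_iff by auto
  hence neT: "T \<noteq> {}" by auto
  have key: "Min (F ` T) \<le> S y x"
  proof (rule S_ge[OF yV x])
    fix p assume p: "path_links E og tm p y x"
    define e where "e = last p"
    define q where "q = butlast p"
    have pq: "p = q @ [e]" using p unfolding e_def q_def pl_iff by simp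
    have eT: "e \<in> T" using p unfolding T_def e_def pl_iff by auto
    have "Min (F ` T) \<le> F e" using fT eT by simp
    also have "F e \<le> sigma_path H c p"
    proof (cases "q = []")
      case True
      hence "og e = y" using p pq by (simp add: pl_iff)
      thus ?thesis using S_self[OF y] True pq by (simp add: F_def sp_single)
    next
      case False
      have "path_links E og tm q y (og e)" using p pq False
        by (auto simp: pl_iff successively_append_iff)
      hence "S y (og e) \<le> sigma_path H c q" by (rule S_le)
      thus ?thesis using pq by (simp add: F_def sp_append sp_single)
    qed
    finally show "Min (F ` T) \<le> sigma_path H c p" .
  qed
  have "Min (F ` T) \<in> F ` T" using fT neT by (intro Min_in) auto
  then obtain e where "e \<in> T" "F e = Min (F ` T)" by auto
  thus ?thesis using key unfolding T_def F_def by auto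
qed

end


theorem theorem6p22:
  fixes V :: "'v set" and E :: "'e set" and og tm :: "'e \<Rightarrow> 'v" and rv :: "'e \<Rightarrow> 'e"
    and H :: "'e \<Rightarrow> real \<Rightarrow> real \<Rightarrow> real" and c :: real and g :: "'v \<Rightarrow> real"
  assumes net: "network V E og tm rv H"
    and crit: "critical_value E og tm H c"
    and ne: "aubry V E og tm H c \<noteq> {}"
    and g: "\<forall>x\<in>aubry V E og tm H c. \<forall>y\<in>aubry V E og tm H c.
              g x - g y \<le> S_dist E og tm H c y x"
  shows "DFE_sol V E og tm rv H c
           (\<lambda>x. Min ((\<lambda>y. g y + S_dist E og tm H c y x) ` aubry V E og tm H c))
       \<and> (\<forall>x\<in>aubry V E og tm H c.
           Min ((\<lambda>y. g y + S_dist E og tm H c y x) ` aubry V E og tm H c) = g x)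
       \<and> (\<forall>u. DFE_sol V E og tm rv H c u \<and> (\<forall>x\<in>aubry V E og tm H c. u x = g x) \<longrightarrow>
            (\<forall>x\<in>V. u x = Min ((\<lambda>y. g y + S_dist E og tm H c y x) ` aubry V E og tm H c)))"
proof -
  obtain u0 where sub: "DFE_subsol E og tm H c u0" using crit unfolding critical_value_def by blast
  interpret ctx V E og tm rv H c u0 using net sub by unfold_locales
  define A where "A = aubry V E og tm H c"
  define v where "v = (\<lambda>x. Min ((\<lambda>y. g y + S y x) ` A))"
  have AV: "A \<subseteq> V" using aubryV A_def by simp
  have fA: "finite A" using AV finV finite_subset by blast
  have neA: "A \<noteq> {}" using ne A_def by simp
  have v_le: "v x \<le> g y + S y x" if "y \<in> A" for x y
    unfolding v_def using fA that by simp
  have v_ex: "\<exists>y\<in>A. v x = g y + S y x" for x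
  proof -
    have "v x \<in> (\<lambda>y. g y + S y x) ` A" unfolding v_def using fA neA by (intro Min_in) auto
    thus ?thesis by auto
  qed
  have part2: "v x = g x" if x: "x \<in> A" for x
  proof -
    have "v x \<le> g x" using v_le[OF x, of x] S_self[of x] x A_def by simp
    moreover obtain y where "y \<in> A" "v x = g y + S y x" using v_ex by blast
    moreover have "g x - g y \<le> S y x" using g x \<open>y \<in> A\<close> A_def by blast
    ultimately show ?thesis by simp
  qed
  have part1: "DFE_sol V E og tm rv H c v"
    unfolding DFE_sol_def
  proof
    fix x assume x: "x \<in> V"
    let ?F = "\<lambda>e. v (tm e) + sigma H c (rv e)"
    let ?T = "{e\<in>E. og e = x}"
    have fT: "finite ?T" using finE by simp
    have up: "v x \<le> ?F e" if e: "e \<in> ?T" for e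
    proof -
      obtain y where y: "y \<in> A" "v (tm e) = g y + S y (tm e)" using v_ex by blast
      have "S y x \<le> S y (og (rv e)) + sigma H c (rv e)"
        using tri_edge[OF x _ rvE] e y AV tmrv by auto
      hence "S y x \<le> S y (tm e) + sigma H c (rv e)" using ogrv e by simp
      thus ?thesis using v_le[OF y(1), of x] y by simp
    qed
    obtain y where y: "y \<in> A" "v x = g y + S y x" using v_ex by blast
    obtain e' where e': "e' \<in> E" "tm e' = x" "S y (og e') + sigma H c e' \<le> S y x"
      using last_edge[OF _ x, of y] y A_def by auto
    have eT: "rv e' \<in> ?T" using e' rvE ogrv by auto
    have "?F (rv e') \<le> v x"
      using v_le[OF y(1), of "og e'"] y e' tmrv rvrv by auto
    hence "?F (rv e') = v x" using up[OF eT] by simp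
    hence mem: "v x \<in> ?F ` ?T" by (intro image_eqI[OF _ eT]) simp
    show "v x = Min (?F ` ?T)"
    proof (rule Min_eqI[symmetric])
      show "finite (?F ` ?T)" using fT by simp
      show "v x \<in> ?F ` ?T" by (rule mem)
      fix r assume "r \<in> ?F ` ?T"
      then obtain e where "e \<in> ?T" "r = ?F e" by auto
      thus "v x \<le> r" using up by simp
    qed
  qed
  have part3: "u x = v x" if u: "DFE_sol V E og tm rv H c u" and ug: "\<forall>x\<in>A. u x = g x"
     and x: "x \<in> V" for u x
  proof -
    have solx: "u z = Min ((\<lambda>e. u (tm e) + sigma H c (rv e)) ` {e\<in>E. og e = z})" if "z \<in> V" for z
      using u that unfolding DFE_sol_def by blast
    have fT: "finite {e\<in>E. og e = z}" for z using finE by simp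
    have sub_u: "DFE_subsol E og tm H c u"
      unfolding DFE_subsol_def
    proof
      fix f assume f: "f \<in> E"
      have "u (tm f) \<le> u (tm (rv f)) + sigma H c (rv (rv f))"
        using solx[OF tmV[OF f]] fT[of "tm f"] rvE[OF f] ogrv[OF f] by (simp add: Min_le)
      thus "u (tm f) - u (og f) \<le> sigma H c f" using tmrv[OF f] rvrv[OF f] by simp
    qed
    have ux_le: "u x \<le> v x"
    proof -
      obtain y where y: "y \<in> A" "v x = g y + S y x" using v_ex by blast
      have "u x - u y \<le> S y x" using S_sub[OF sub_u _ x, of y] y AV by auto
      thus ?thesis using y ug by auto
    qed
    have exn: "\<exists>e. e \<in> E \<and> og e = z \<and> u z = u (tm e) + sigma H c (rv e)" if z: "z \<in> V" for z
    proof -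
      have "{e\<in>E. og e = z} \<noteq> {}" using z VE by auto
      hence "Min ((\<lambda>e. u (tm e) + sigma H c (rv e)) ` {e\<in>E. og e = z}) \<in> (\<lambda>e. u (tm e) + sigma H c (rv e)) ` {e\<in>E. og e = z}"
        using fT[of z] by (intro Min_in) auto
      thus ?thesis using solx[OF z] by auto
    qed
    define nxt where "nxt = (\<lambda>z. SOME e. e \<in> E \<and> og e = z \<and> u z = u (tm e) + sigma H c (rv e))"
    have nxt: "nxt z \<in> E \<and> og (nxt z) = z \<and> u z = u (tm (nxt z)) + sigma H c (rv (nxt z))" if "z \<in> V" for z
      unfolding nxt_def by (rule someI_ex[OF exn[OF that]])
    define X where "X = (\<lambda>k. ((\<lambda>z. tm (nxt z)) ^^ k) x)"
    have XS: "X (Suc k) = tm (nxt (X k))" for k by (simp add: X_def)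
    have X0: "X 0 = x" by (simp add: X_def)
    have XV: "X k \<in> V" for k
      by (induction k) (use x nxt tmV in \<open>auto simp: XS X0\<close>)
    define w where "w = (\<lambda>k. rv (nxt (X k)))"
    have wE: "w k \<in> E" for k using nxt[OF XV[of k]] rvE by (simp add: w_def)
    have wog: "og (w k) = X (Suc k)" for k using nxt[OF XV[of k]] ogrv by (simp add: w_def XS)
    have wtm: "tm (w k) = X k" for k using nxt[OF XV[of k]] tmrv by (simp add: w_def)
    have wsig: "sigma H c (w k) = u (X k) - u (X (Suc k))" for k using nxt[OF XV[of k]] by (simp add: w_def XS)
    have pw: "0 < n \<Longrightarrow> path_links E og tm (pth w i n) (X (i+n)) (X i) \<and>
               sigma_path H c (pth w i n) = u (X i) - u (X (i+n))" for i n
    proof (induction n)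
      case 0 thus ?case by simp
    next
      case (Suc n)
      show ?case
      proof (cases "n = 0")
        case True
        thus ?thesis using pl_single[OF wE[of i], of og tm] wog wtm wsig by (simp add: sp_single)
      next
        case False
        hence IH: "path_links E og tm (pth w i n) (X (i+n)) (X i)"
              "sigma_path H c (pth w i n) = u (X i) - u (X (i+n))" using Suc by auto
        have "pth w i (Suc n) = [w (i+n)] @ pth w i n" by simp
        moreover have "path_links E og tm ([w (i+n)] @ pth w i n) (X (i + Suc n)) (X i)"
          using pl_append[OF pl_single[OF wE[of "i+n"], of og tm]] IH(1) wog wtm by fastforce
        moreover have "sigma_path H c ([w (i+n)] @ pth w i n) = u (X i) - u (X (i + Suc n))"
          using IH(2) wsig by (simp add: sigma_path_def)
        ultimately show ?thesis by simp
      qed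
    qed
    have ninj: "\<not> inj_on X {0..card V}"
    proof
      assume "inj_on X {0..card V}"
      hence "card (X ` {0..card V}) = card V + 1" by (simp add: card_image)
      moreover have "card (X ` {0..card V}) \<le> card V"
        using XV finV by (intro card_mono) auto
      ultimately show False by simp
    qed
    obtain i j where ij: "i < j" "X i = X j"
    proof -
      obtain a b where "a \<noteq> b" "X a = X b" using ninj unfolding inj_on_def by blast
      thus ?thesis using that by (metis linorder_neqE_nat)
    qed
    have XiA: "X i \<in> A"
    proof -
      have h: "path_links E og tm (pth w i (j-i)) (X i) (X i)"
        "sigma_path H c (pth w i (j-i)) = 0" using pw[of "j-i" i] ij by auto
      have "is_cycle E og tm (pth w i (j-i))" using h(1) unfolding is_cycle_def path_links_def by auto
      moreover have "incident og tm (pth w i (j-i)) (X i)"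
        using h(1) unfolding incident_def pl_iff by (metis last_in_set)
      ultimately show ?thesis using h(2) XV unfolding A_def aubry_def by blast
    qed
    have "v x \<le> u x"
    proof (cases "i = 0")
      case True
      thus ?thesis using XiA X0 part2 ug by simp
    next
      case False
      hence h: "path_links E og tm (pth w 0 i) (X i) x" "sigma_path H c (pth w 0 i) = u x - u (X i)"
        using pw[of i 0] X0 by auto
      have "S (X i) x \<le> u x - u (X i)" using S_le[OF h(1)] h(2) by simp
      thus ?thesis using v_le[OF XiA, of x] ug XiA by simp
    qed
    thus ?thesis using ux_le by simp
  qed
  have p1: "DFE_sol V E og tm rv H c
           (\<lambda>x. Min ((\<lambda>y. g y + S_dist E og tm H c y x) ` aubry V E og tm H c))"
    using part1 unfolding v_def A_def .
  have p2: "\<forall>x\<in>aubry V E og tm H c.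
           Min ((\<lambda>y. g y + S_dist E og tm H c y x) ` aubry V E og tm H c) = g x"
  proof
    fix x assume "x \<in> aubry V E og tm H c"
    thus "Min ((\<lambda>y. g y + S_dist E og tm H c y x) ` aubry V E og tm H c) = g x"
      using part2[of x] unfolding v_def A_def by blast
  qed
  have p3: "\<forall>u. DFE_sol V E og tm rv H c u \<and> (\<forall>x\<in>aubry V E og tm H c. u x = g x) \<longrightarrow>
            (\<forall>x\<in>V. u x = Min ((\<lambda>y. g y + S_dist E og tm H c y x) ` aubry V E og tm H c))"
  proof (intro allI impI ballI)
    fix u x assume h: "DFE_sol V E og tm rv H c u \<and> (\<forall>x\<in>aubry V E og tm H c. u x = g x)" and x: "x \<in> V"
    have "\<forall>x\<in>A. u x = g x" using h unfolding A_def by blast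
    hence "u x = v x" using part3[of u x] h x by blast
    thus "u x = Min ((\<lambda>y. g y + S_dist E og tm H c y x) ` aubry V E og tm H c)"
      unfolding v_def A_def .
  qed
  show ?thesis using p1 p2 p3 by (intro conjI)
qed

end
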